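(* Let $\kappa$ be an infinite cardinal and assume $\clubsuit^{\Diamond}_{\kappa^+}$. Then there exists a sequence $(B_\delta\mid\delta\in\lim(\kappa^+))$ such that for every limit ordinal $\delta<\kappa^+$, $B_\delta\subseteq\delta$ is a club (closed unbounded) subset of $\delta$, and for every club $C\subseteq\kappa^+$ there is a club $D\subseteq C$ of $\kappa^+$ such that the set $\{\delta\in\lim(\kappa^+)\mid D\cap\delta=B_\delta\}$ is stationary in $\kappa^+$.
   Context: $\lim(\kappa^+)$ denotes the set of limit ordinals below $\kappa^+$. For a regular uncountable cardinal $\lambda$, a superclub sequence for $\lambda$ is a sequence $(S_\alpha\mid\alpha<\lambda)$ with $S_\alpha\subseteq\alpha$ for each $\alpha$, such that for every $A\in[\lambda]^\lambda$ there is $B\in[A]^\lambda$ for which $\{\alpha<\lambda\mid B\cap\alpha=S_\alpha\}$ is stationary in $\lambda$. $\clubsuit^{\Diamond}_\lambda$ (superclub at $\lambda$) is the statement that a superclub sequence for $\lambda$ exists. (Since prediction happens on a stationary set, one may index a superclub sequence by limit ordinals only.) *)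

theory Defs
  imports Main
begin

text \<open>Ordinals below a cardinal are modelled as the field of a well-order W
(for us W = cardSuc r, i.e. kappa^+ with kappa = r).\<close>

definition wo_limit :: "'a rel \<Rightarrow> 'a \<Rightarrow> bool" where
  "wo_limit W d \<longleftrightarrow> d \<in> Field W \<and> Order_Relation.underS W d \<noteq> {} \<and>
     (\<forall>b \<in> Order_Relation.underS W d. \<exists>c \<in> Order_Relation.underS W d. (b, c) \<in> W \<and> b \<noteq> c)"

definition wo_limits :: "'a rel \<Rightarrow> 'a set" where
  "wo_limits W = {d. wo_limit W d}"

definition wo_unbounded_in :: "'a rel \<Rightarrow> 'a set \<Rightarrow> 'a set \<Rightarrow> bool" where
  "wo_unbounded_in W A X \<longleftrightarrow> (\<forall>b \<in> A. \<exists>c \<in> X \<inter> A. (b, c) \<in> W \<and> b \<noteq> c)"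

definition wo_closed_in :: "'a rel \<Rightarrow> 'a set \<Rightarrow> 'a set \<Rightarrow> bool" where
  "wo_closed_in W A X \<longleftrightarrow>
     (\<forall>g \<in> A. wo_limit W g \<and> wo_unbounded_in W (Order_Relation.underS W g) X \<longrightarrow> g \<in> X)"

definition wo_club_in :: "'a rel \<Rightarrow> 'a set \<Rightarrow> 'a set \<Rightarrow> bool" where
  "wo_club_in W A X \<longleftrightarrow> X \<subseteq> A \<and> wo_unbounded_in W A X \<and> wo_closed_in W A X"

definition wo_club :: "'a rel \<Rightarrow> 'a set \<Rightarrow> bool" where
  "wo_club W X \<longleftrightarrow> wo_club_in W (Field W) X"

definition wo_stationary :: "'a rel \<Rightarrow> 'a set \<Rightarrow> bool" where
  "wo_stationary W T \<longleftrightarrow> T \<subseteq> Field W \<and> (\<forall>C. wo_club W C \<longrightarrow> T \<inter> C \<noteq> {})"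

definition superclub_seq :: "'a rel \<Rightarrow> ('a \<Rightarrow> 'a set) \<Rightarrow> bool" where
  "superclub_seq W S \<longleftrightarrow>
     (\<forall>a \<in> Field W. S a \<subseteq> Order_Relation.underS W a) \<and>
     (\<forall>A. A \<subseteq> Field W \<and> (card_of A, card_of (Field W)) \<in> ordIso \<longrightarrow>
        (\<exists>B. B \<subseteq> A \<and> (card_of B, card_of (Field W)) \<in> ordIso \<and>
             wo_stationary W {a \<in> Field W. B \<inter> Order_Relation.underS W a = S a}))"

definition superclub :: "'a rel \<Rightarrow> bool" where
  "superclub W \<longleftrightarrow> (\<exists>S. superclub_seq W S)"

end

theory Submission imports Defs begin
unbundle cardinal_syntax

locale WOL = fixes W :: "'b rel" assumes WO: "Well_order W"
begin

lemma trans': "(x,y) \<in> W \<Longrightarrow> (y,z) \<in> W \<Longrightarrow> (x,z) \<in> W"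
  using WO unfolding well_order_on_def linear_order_on_def partial_order_on_def preorder_on_def trans_def by blast

lemma antisym': "(x,y) \<in> W \<Longrightarrow> (y,x) \<in> W \<Longrightarrow> x = y"
  using WO unfolding well_order_on_def linear_order_on_def partial_order_on_def antisym_def by blast

lemma total': "x \<in> Field W \<Longrightarrow> y \<in> Field W \<Longrightarrow> x \<noteq> y \<Longrightarrow> (x,y) \<in> W \<or> (y,x) \<in> W"
  using WO unfolding well_order_on_def linear_order_on_def total_on_def by blast

lemma refl': "x \<in> Field W \<Longrightarrow> (x,x) \<in> W"
  using WO unfolding well_order_on_def linear_order_on_def partial_order_on_def preorder_on_def refl_on_def by blast

lemma minim: "U \<subseteq> Field W \<Longrightarrow> U \<noteq> {} \<Longrightarrow> \<exists>g\<in>U. \<forall>a\<in>U. (g,a) \<in> W"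
  using WO Linear_order_Well_order_iff[of W] unfolding well_order_on_def by blast

lemma uS: "x \<in> underS W y \<longleftrightarrow> (x,y) \<in> W \<and> x \<noteq> y"
  unfolding underS_def by auto

lemma ltlt: "(x,y) \<in> W \<Longrightarrow> x \<noteq> y \<Longrightarrow> (y,z) \<in> W \<Longrightarrow> x \<noteq> z"
  using antisym' trans' by blast
lemma ltlt2: "(x,y) \<in> W \<Longrightarrow> y \<noteq> z \<Longrightarrow> (y,z) \<in> W \<Longrightarrow> x \<noteq> z"
  using antisym' trans' by blast

lemma uS_trans: "x \<in> underS W y \<Longrightarrow> y \<in> underS W z \<Longrightarrow> x \<in> underS W z"
  unfolding uS using trans' ltlt by blast

definition clo :: "'b set \<Rightarrow> 'b set" where
  "clo X = {g \<in> Field W. g \<in> X \<or> (wo_limit W g \<and> wo_unbounded_in W (underS W g) X)}"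

lemma unb_mono: "X \<subseteq> Y \<Longrightarrow> wo_unbounded_in W A X \<Longrightarrow> wo_unbounded_in W A Y"
  unfolding wo_unbounded_in_def by blast

lemma unb_Int: "wo_unbounded_in W A X \<longleftrightarrow> wo_unbounded_in W A (X \<inter> A)"
  unfolding wo_unbounded_in_def by blast

lemma clo_unb: "wo_unbounded_in W (underS W g) (clo X) \<Longrightarrow> wo_unbounded_in W (underS W g) X"
  unfolding wo_unbounded_in_def
proof
  fix b assume H: "\<forall>b\<in>underS W g. \<exists>c\<in>clo X \<inter> underS W g. (b, c) \<in> W \<and> b \<noteq> c"
    and b: "b \<in> underS W g"
  then obtain c where c: "c \<in> clo X" "c \<in> underS W g" "(b, c) \<in> W" "b \<noteq> c" by blast
  show "\<exists>c\<in>X \<inter> underS W g. (b, c) \<in> W \<and> b \<noteq> c"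
  proof (cases "c \<in> X")
    case True then show ?thesis using c by blast
  next
    case False
    then have "wo_unbounded_in W (underS W c) X" using c(1) unfolding clo_def by blast
    moreover have "b \<in> underS W c" using c uS by blast
    ultimately obtain c' where "c' \<in> X" "c' \<in> underS W c" "(b,c') \<in> W" "b \<noteq> c'"
      unfolding wo_unbounded_in_def by blast
    then show ?thesis using c(2) uS_trans by blast
  qed
qed

lemma clo_closed: "wo_closed_in W A (clo X)"
  unfolding wo_closed_in_def
proof (intro ballI impI)
  fix g assume "g \<in> A" "wo_limit W g \<and> wo_unbounded_in W (underS W g) (clo X)"
  then show "g \<in> clo X" using clo_unb unfolding clo_def wo_limit_def by blast
qed

lemma clo_sub: "X \<subseteq> Field W \<Longrightarrow> X \<subseteq> clo X"
  unfolding clo_def by blast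

lemma clo_F: "clo X \<subseteq> Field W"
  unfolding clo_def by blast

lemma clo_restrict: "clo X \<inter> underS W d = clo (X \<inter> underS W d) \<inter> underS W d"
proof -
  have "wo_unbounded_in W (underS W g) X \<longleftrightarrow> wo_unbounded_in W (underS W g) (X \<inter> underS W d)"
    if "g \<in> underS W d" for g
    using that uS_trans unfolding wo_unbounded_in_def by blast
  then show ?thesis unfolding clo_def by blast
qed

end

locale RWL = WOL + assumes CO: "Card_order W" and REG: "regularCard W"
  and NAT: "|UNIV::nat set| <o W"
begin

lemma supseq:
  assumes b: "b \<in> Field W" and f: "\<And>x. x \<in> Field W \<Longrightarrow> f x \<in> Field W \<and> (x, f x) \<in> W \<and> x \<noteq> f x"
  shows "\<exists>g \<in> Field W. wo_limit W g \<and> b \<in> underS W g \<and> (\<forall>n. (f^^n) b \<in> underS W g) \<and>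
     (\<forall>a \<in> underS W g. \<exists>n. (a, (f^^n) b) \<in> W \<and> a \<noteq> (f^^n) b)"
proof -
  define K where "K = range (\<lambda>n. (f^^n) b)"
  have KF: "\<And>n. (f^^n) b \<in> Field W" by (induct_tac n) (auto simp: b f)
  have KF': "K \<subseteq> Field W" using KF K_def by auto
  have fK: "f k \<in> K" if kK: "k \<in> K" for k
  proof -
    obtain n where n: "k = (f^^n) b" using kK K_def by blast
    have "f k = (f^^(Suc n)) b" using n by simp
    then show ?thesis unfolding K_def by blast
  qed
  have "|K| \<le>o |UNIV::nat set|" unfolding K_def by (rule card_of_image)
  then have Kl: "|K| <o W" using NAT ordLeq_ordLess_trans by blast
  have "\<not> cofinal K W"
  proof
    assume "cofinal K W"
    then have "|K| =o W" using REG KF' unfolding regularCard_def by blast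
    then show False using Kl not_ordLess_ordIso by blast
  qed
  then obtain a where a: "a \<in> Field W" "\<forall>k\<in>K. a = k \<or> (a,k) \<notin> W"
    unfolding cofinal_def by blast
  have le: "(k, a) \<in> W" if "k \<in> K" for k
  proof (cases "a = k")
    case True then show ?thesis using refl' a(1) by simp
  next
    case False then have "(a,k) \<notin> W" using a(2) that by blast
    then show ?thesis using total'[of a k] a(1) that KF' False by blast
  qed
  have ka: "k \<in> underS W a" if "k \<in> K" for k
  proof -
    have "(k, f k) \<in> W" "k \<noteq> f k" "(f k, a) \<in> W" using f[of k] KF' that le[OF fK[OF that]] by blast+
    then show ?thesis unfolding uS using trans' ltlt by blast
  qed
  define U where "U = {a \<in> Field W. \<forall>k\<in>K. k \<in> underS W a}"
  have "U \<subseteq> Field W" "U \<noteq> {}" using a ka unfolding U_def by auto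
  then obtain g where g: "g \<in> U" "\<forall>a\<in>U. (g,a) \<in> W" using minim by blast
  have gF: "g \<in> Field W" and gK: "\<forall>k\<in>K. k \<in> underS W g" using g U_def by auto
  have bK: "b \<in> K" unfolding K_def by (metis funpow_0 rangeI)
  have cof: "\<exists>k\<in>K. x \<in> underS W k" if x: "x \<in> underS W g" for x
  proof -
    have xF: "x \<in> Field W" using x underS_Field by fast
    have "x \<notin> U"
    proof
      assume "x \<in> U" then have "(g,x) \<in> W" using g by blast
      then show False using x antisym' unfolding uS by blast
    qed
    then obtain k where k: "k \<in> K" "k \<notin> underS W x" using xF U_def by blast
    then have "(x,k) \<in> W" using total'[of x k] xF KF' refl'[of x] unfolding uS by blast
    moreover have "(k, f k) \<in> W" "k \<noteq> f k" using f KF' k by auto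
    ultimately have "x \<in> underS W (f k)" unfolding uS using trans' ltlt2 by blast
    then show ?thesis using fK k by blast
  qed
  have lim: "wo_limit W g"
    unfolding wo_limit_def
  proof (intro conjI ballI)
    show "g \<in> Field W" by fact
    show "underS W g \<noteq> {}" using gK bK by blast
    fix x assume "x \<in> underS W g"
    then obtain k where k: "k \<in> K" "x \<in> underS W k" using cof by blast
    have "k \<in> underS W g" using gK k(1) by blast
    then show "\<exists>c\<in>underS W g. (x, c) \<in> W \<and> x \<noteq> c" using k(2) uS[of x k] by blast
  qed
  show ?thesis
  proof (intro bexI conjI ballI allI)
    show "wo_limit W g" by fact
    show "b \<in> underS W g" using gK bK by blast
    show "(f ^^ n) b \<in> underS W g" for n using gK K_def by blast
    show "\<exists>n. (x, (f ^^ n) b) \<in> W \<and> x \<noteq> (f ^^ n) b" if xg: "x \<in> underS W g" for x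
    proof -
      obtain k where k: "k \<in> K" "x \<in> underS W k" using cof[OF xg] by blast
      then obtain n where "k = (f^^n) b" using K_def by blast
      then show ?thesis using k(2) unfolding uS by blast
    qed
  qed fact
qed

lemma choose_up:
  assumes "wo_unbounded_in W (Field W) X"
  obtains h where "\<And>x. x \<in> Field W \<Longrightarrow> h x \<in> X \<and> h x \<in> Field W \<and> (x, h x) \<in> W \<and> x \<noteq> h x"
proof -
  have "\<forall>x\<in>Field W. \<exists>c. c \<in> X \<and> c \<in> Field W \<and> (x, c) \<in> W \<and> x \<noteq> c"
    using assms unfolding wo_unbounded_in_def by blast
  then have "\<exists>h. \<forall>x\<in>Field W. h x \<in> X \<and> h x \<in> Field W \<and> (x, h x) \<in> W \<and> x \<noteq> h x"
    by (rule bchoice)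
  then show ?thesis using that by blast
qed

lemma limpts_club:
  assumes X: "wo_unbounded_in W (Field W) X"
  shows "wo_club W {g \<in> Field W. wo_limit W g \<and> wo_unbounded_in W (underS W g) X}" (is "wo_club W ?E")
  unfolding wo_club_def wo_club_in_def
proof (intro conjI)
  show "?E \<subseteq> Field W" by blast
  have "?E \<subseteq> clo X" unfolding clo_def by blast
  then show "wo_closed_in W (Field W) ?E"
    unfolding wo_closed_in_def using clo_unb unb_mono by blast
  obtain h where h: "\<And>x. x \<in> Field W \<Longrightarrow> h x \<in> X \<and> h x \<in> Field W \<and> (x, h x) \<in> W \<and> x \<noteq> h x"
    using choose_up[OF X] by blast
  show "wo_unbounded_in W (Field W) ?E"
    unfolding wo_unbounded_in_def[of W "Field W" ?E]
  proof
    fix b assume b: "b \<in> Field W"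
    obtain g where g: "g \<in> Field W" "wo_limit W g" "b \<in> underS W g" "\<forall>n. (h^^n) b \<in> underS W g"
      "\<forall>a \<in> underS W g. \<exists>n. (a, (h^^n) b) \<in> W \<and> a \<noteq> (h^^n) b"
      using supseq[OF b, of h] h by blast
    have hF: "\<And>n. (h^^n) b \<in> Field W" by (induct_tac n) (auto simp: b h)
    have "wo_unbounded_in W (underS W g) X"
      unfolding wo_unbounded_in_def
    proof
      fix a assume "a \<in> underS W g"
      then obtain n where n: "(a, (h^^n) b) \<in> W" "a \<noteq> (h^^n) b" using g(5) by blast
      let ?k = "(h^^n) b"
      have "h ?k = (h^^Suc n) b" by simp
      then have "h ?k \<in> underS W g" using g(4) by metis
      moreover have "h ?k \<in> X" "(?k, h ?k) \<in> W" using h[OF hF[of n]] by auto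
      moreover have "a \<in> underS W (h ?k)" using n \<open>(?k, h ?k) \<in> W\<close> unfolding uS using trans' ltlt by blast
      ultimately show "\<exists>c\<in>X \<inter> underS W g. (a, c) \<in> W \<and> a \<noteq> c" using uS[of a "h ?k"] by blast
    qed
    then have "g \<in> ?E" using g by blast
    then show "\<exists>c\<in>?E \<inter> Field W. (b, c) \<in> W \<and> b \<noteq> c" using g(3) uS[of b g] by blast
  qed
qed

lemma club_inter:
  assumes C1: "wo_club W C1" and C2: "wo_club W C2"
  shows "wo_club W (C1 \<inter> C2)"
  unfolding wo_club_def wo_club_in_def
proof (intro conjI)
  show "C1 \<inter> C2 \<subseteq> Field W" using C1 unfolding wo_club_def wo_club_in_def by blast
  show "wo_closed_in W (Field W) (C1 \<inter> C2)"
    using C1 C2 unb_mono[of "C1 \<inter> C2" C1] unb_mono[of "C1 \<inter> C2" C2]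
    unfolding wo_club_def wo_club_in_def wo_closed_in_def by blast
  obtain h1 where h1: "\<And>x. x \<in> Field W \<Longrightarrow> h1 x \<in> C1 \<and> h1 x \<in> Field W \<and> (x, h1 x) \<in> W \<and> x \<noteq> h1 x"
    using choose_up C1 unfolding wo_club_def wo_club_in_def by blast
  obtain h2 where h2: "\<And>x. x \<in> Field W \<Longrightarrow> h2 x \<in> C2 \<and> h2 x \<in> Field W \<and> (x, h2 x) \<in> W \<and> x \<noteq> h2 x"
    using choose_up C2 unfolding wo_club_def wo_club_in_def by blast
  define h where "h = h2 \<circ> h1"
  have h: "h x \<in> Field W \<and> (x, h x) \<in> W \<and> x \<noteq> h x" if "x \<in> Field W" for x
  proof -
    have "(x, h1 x) \<in> W" "x \<noteq> h1 x" "(h1 x, h2 (h1 x)) \<in> W" "h2 (h1 x) \<in> Field W"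
      using h1[OF that] h2[of "h1 x"] h1[OF that] by auto
    then show ?thesis unfolding h_def using trans' ltlt by auto
  qed
  show "wo_unbounded_in W (Field W) (C1 \<inter> C2)"
    unfolding wo_unbounded_in_def
  proof
    fix b assume b: "b \<in> Field W"
    obtain g where g: "g \<in> Field W" "wo_limit W g" "b \<in> underS W g" "\<forall>n. (h^^n) b \<in> underS W g"
      "\<forall>a \<in> underS W g. \<exists>n. (a, (h^^n) b) \<in> W \<and> a \<noteq> (h^^n) b"
      using supseq[OF b, of h] h by blast
    have hF: "\<And>n. (h^^n) b \<in> Field W" by (induct_tac n) (auto simp: b h)
    have U1: "wo_unbounded_in W (underS W g) C1"
      unfolding wo_unbounded_in_def
    proof
      fix a assume "a \<in> underS W g"
      then obtain n where n: "(a, (h^^n) b) \<in> W" "a \<noteq> (h^^n) b" using g(5) by blast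
      let ?k = "(h^^n) b"
      have "h ?k = (h^^Suc n) b" by simp
      then have hk: "h ?k \<in> underS W g" using g(4) by metis
      have k1: "h1 ?k \<in> C1" "(?k, h1 ?k) \<in> W" "h1 ?k \<in> Field W" using h1[OF hF[of n]] by auto
      have "(h1 ?k, h ?k) \<in> W" using h2[OF k1(3)] unfolding h_def by auto
      then have "h1 ?k \<in> underS W g" using hk unfolding uS using trans' ltlt by blast
      moreover have "a \<in> underS W (h1 ?k)" using n k1 unfolding uS using trans' ltlt by blast
      ultimately show "\<exists>c\<in>C1 \<inter> underS W g. (a, c) \<in> W \<and> a \<noteq> c" using k1(1) uS[of a "h1 ?k"] by blast
    qed
    have U2: "wo_unbounded_in W (underS W g) C2"
      unfolding wo_unbounded_in_def
    proof
      fix a assume "a \<in> underS W g"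
      then obtain n where n: "(a, (h^^n) b) \<in> W" "a \<noteq> (h^^n) b" using g(5) by blast
      let ?k = "(h^^n) b"
      have "h ?k = (h^^Suc n) b" by simp
      then have hk: "h ?k \<in> underS W g" using g(4) by metis
      have "(?k, h ?k) \<in> W" "?k \<noteq> h ?k" "h ?k \<in> C2" using h[OF hF[of n]] h2[of "h1 ?k"] h1[OF hF[of n]]
        unfolding h_def by auto
      moreover have "a \<in> underS W (h ?k)" using n calculation unfolding uS using trans' ltlt by blast
      ultimately show "\<exists>c\<in>C2 \<inter> underS W g. (a, c) \<in> W \<and> a \<noteq> c" using hk uS[of a "h ?k"] by blast
    qed
    have "g \<in> C1" "g \<in> C2" using C1 C2 g U1 U2 unfolding wo_club_def wo_club_in_def wo_closed_in_def by blast+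
    then show "\<exists>c\<in>(C1 \<inter> C2) \<inter> Field W. (b, c) \<in> W \<and> b \<noteq> c" using g(1,3) uS[of b g] by blast
  qed
qed

end

context RWL begin
lemma big_unb:
  assumes INF: "\<not> finite (Field W)" and BF: "B \<subseteq> Field W" and Bc: "|B| =o |Field W|"
  shows "wo_unbounded_in W (Field W) B"
proof (rule ccontr)
  assume "\<not> ?thesis"
  then obtain b where b: "b \<in> Field W" "\<forall>c\<in>B \<inter> Field W. \<not> ((b, c) \<in> W \<and> b \<noteq> c)"
    unfolding wo_unbounded_in_def by blast
  have "Field W \<noteq> under W b" using Card_order_infinite_not_under[OF CO INF] by blast
  moreover have "under W b \<subseteq> Field W" unfolding under_def Field_def by blast
  ultimately obtain c where c: "c \<in> Field W" "(c, b) \<notin> W" unfolding under_def by blast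
  have cb: "c \<noteq> b" using c refl' by blast
  have bc: "(b, c) \<in> W" using total'[OF b(1) c(1)] cb c by blast
  have "B \<subseteq> underS W c"
  proof
    fix x assume x: "x \<in> B"
    have xF: "x \<in> Field W" using x BF by blast
    have xb: "(x, b) \<in> W"
    proof (cases "x = b")
      case True then show ?thesis using refl' b(1) by simp
    next
      case False then have "(b,x) \<notin> W" using b(2) x xF by blast
      then show ?thesis using total'[of x b] xF b(1) False by blast
    qed
    have "(x, c) \<in> W" using trans'[OF xb bc] .
    moreover have "x \<noteq> c" using xb c(2) by blast
    ultimately show "x \<in> underS W c" unfolding uS by blast
  qed
  then have "|B| \<le>o |underS W c|" by (rule card_of_mono1)
  also have "|underS W c| <o W" using card_of_underS[OF CO c(1)] .
  finally have "|B| <o W" .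
  moreover have "|B| =o W" using Bc card_of_Field_ordIso[OF CO] ordIso_transitive by blast
  ultimately show False using not_ordLess_ordIso by blast
qed
end

theorem lemma2p1:
  fixes r :: "'a rel"
  assumes "Card_order r"
    and "\<not> finite (Field r)"
    and "superclub (cardSuc r)"
  shows "\<exists>B :: 'a set \<Rightarrow> 'a set set.
     (\<forall>d \<in> wo_limits (cardSuc r).
        wo_club_in (cardSuc r) (Order_Relation.underS (cardSuc r) d) (B d)) \<and>
     (\<forall>C. wo_club (cardSuc r) C \<longrightarrow>
        (\<exists>D. D \<subseteq> C \<and> wo_club (cardSuc r) D \<and>
           wo_stationary (cardSuc r) {d \<in> wo_limits (cardSuc r). D \<inter> Order_Relation.underS (cardSuc r) d = B d}))"
proof -
  define W where "W = cardSuc r"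
  have WO: "Well_order W" unfolding W_def using cardSuc_Well_order[OF assms(1)] .
  have CO: "Card_order W" unfolding W_def using cardSuc_Card_order[OF assms(1)] .
  have INF: "\<not> finite (Field W)" unfolding W_def using cardSuc_finite[OF assms(1)] assms(2) by simp
  have REG: "regularCard W" unfolding W_def using infinite_cardSuc_regularCard[OF assms(2,1)] .
  have "|UNIV::nat set| \<le>o |Field r|" using assms(2) infinite_iff_card_of_nat by blast
  also have "|Field r| =o r" using card_of_Field_ordIso[OF assms(1)] .
  also have "r <o W" unfolding W_def using cardSuc_greater[OF assms(1)] .
  finally have NAT: "|UNIV::nat set| <o W" .
  interpret RWL W using WO CO REG NAT by unfold_locales auto
  obtain S where S: "superclub_seq W S" using assms(3) unfolding superclub_def W_def by blast
  define Bf where "Bf d = (if wo_unbounded_in W (underS W d) (S d) then clo (S d) \<inter> underS W d else underS W d)" for d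
  have SF: "S d \<subseteq> underS W d" if "d \<in> Field W" for d using S that unfolding superclub_seq_def by blast
  have part1: "wo_club_in W (underS W d) (Bf d)" if d: "d \<in> wo_limits W" for d
  proof -
    have dl: "wo_limit W d" "d \<in> Field W" using d unfolding wo_limits_def wo_limit_def by auto
    show ?thesis
    proof (cases "wo_unbounded_in W (underS W d) (S d)")
      case True
      have Bd: "Bf d = clo (S d) \<inter> underS W d" using True Bf_def by simp
      have "S d \<subseteq> clo (S d) \<inter> underS W d" using SF[OF dl(2)] clo_sub[of "S d"] Order_Relation.underS_Field[of W d] by blast
      then have U: "wo_unbounded_in W (underS W d) (Bf d)" using unb_mono True Bd by blast
      have Cl: "wo_closed_in W (underS W d) (Bf d)"
        unfolding wo_closed_in_def
      proof (intro ballI impI)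
        fix g assume g: "g \<in> underS W d" "wo_limit W g \<and> wo_unbounded_in W (underS W g) (Bf d)"
        then have "wo_unbounded_in W (underS W g) (clo (S d))" using unb_mono[of "Bf d" "clo (S d)"] Bd by blast
        then have "wo_unbounded_in W (underS W g) (S d)" by (rule clo_unb)
        then have "g \<in> clo (S d)" using g Order_Relation.underS_Field[of W d] unfolding clo_def by blast
        then show "g \<in> Bf d" using g Bd by blast
      qed
      show ?thesis unfolding wo_club_in_def using U Cl Bd by blast
    next
      case False
      then have Bd: "Bf d = underS W d" using Bf_def by simp
      show ?thesis unfolding wo_club_in_def wo_closed_in_def wo_unbounded_in_def Bd
        using dl(1) unfolding wo_limit_def by blast
    qed
  qed
  have part2: "\<exists>D. D \<subseteq> C \<and> wo_club W D \<and>
           wo_stationary W {d \<in> wo_limits W. D \<inter> underS W d = Bf d}" if C: "wo_club W C" for C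
  proof -
    have CF: "C \<subseteq> Field W" and Cu: "wo_unbounded_in W (Field W) C" and Ccl: "wo_closed_in W (Field W) C"
      using C unfolding wo_club_def wo_club_in_def by auto
    have "cofinal C W" using Cu unfolding wo_unbounded_in_def cofinal_def by blast
    then have "|C| =o W" using REG CF unfolding regularCard_def by blast
    then have Cc: "|C| =o |Field W|" using card_of_Field_ordIso[OF CO] ordIso_transitive ordIso_symmetric by blast
    obtain B' where B': "B' \<subseteq> C" "|B'| =o |Field W|" "wo_stationary W {a \<in> Field W. B' \<inter> underS W a = S a}"
      using S CF Cc unfolding superclub_seq_def by blast
    have B'F: "B' \<subseteq> Field W" using B'(1) CF by blast
    have B'u: "wo_unbounded_in W (Field W) B'" using big_unb[OF INF B'F B'(2)] .
    define D where "D = clo B'"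
    have DC: "D \<subseteq> C"
    proof
      fix x assume "x \<in> D"
      then have "x \<in> B' \<or> (x \<in> Field W \<and> wo_limit W x \<and> wo_unbounded_in W (underS W x) B')"
        unfolding D_def clo_def by blast
      then show "x \<in> C"
        using B'(1) Ccl unb_mono[of B' C] unfolding wo_closed_in_def by blast
    qed
    have Dclub: "wo_club W D"
      unfolding wo_club_def wo_club_in_def D_def
      using clo_F clo_closed unb_mono[OF clo_sub[OF B'F] B'u] by blast
    define E where "E = {g \<in> Field W. wo_limit W g \<and> wo_unbounded_in W (underS W g) B'}"
    have Eclub: "wo_club W E" unfolding E_def by (rule limpts_club[OF B'u])
    have stat: "wo_stationary W {d \<in> wo_limits W. D \<inter> underS W d = Bf d}"
      unfolding wo_stationary_def
    proof (intro conjI allI impI)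
      show "{d \<in> wo_limits W. D \<inter> underS W d = Bf d} \<subseteq> Field W"
        unfolding wo_limits_def wo_limit_def by blast
      fix C3 assume C3: "wo_club W C3"
      have "wo_club W (E \<inter> C3)" using club_inter[OF Eclub C3] .
      then obtain d where d: "d \<in> Field W" "B' \<inter> underS W d = S d" "d \<in> E" "d \<in> C3"
        using B'(3) unfolding wo_stationary_def by blast
      have dl: "wo_limit W d" "wo_unbounded_in W (underS W d) B'" using d(3) E_def by auto
      have "wo_unbounded_in W (underS W d) (S d)" using dl(2) unb_Int[of "underS W d" B'] d(2) by simp
      then have "Bf d = clo (S d) \<inter> underS W d" using Bf_def by simp
      also have "\<dots> = D \<inter> underS W d" unfolding D_def d(2)[symmetric] using clo_restrict[of B' d] by simp
      finally have "d \<in> {d \<in> wo_limits W. D \<inter> underS W d = Bf d}" using dl(1) unfolding wo_limits_def by simp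
      then show "{d \<in> wo_limits W. D \<inter> underS W d = Bf d} \<inter> C3 \<noteq> {}" using d(4) by blast
    qed
    show ?thesis using DC Dclub stat by blast
  qed
  show ?thesis unfolding W_def[symmetric] using part1 part2 by blast
qed

end
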